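(* Let $N\ge 2$ and let $P=(P_{ij})_{i,j=1}^N$ be the transition matrix of an irreducible Markov chain on $\{1,\dots,N\}$. For each $k$ let $Q^{(k)}=(P_{ij})_{i,j\ne k}$ be obtained from $P$ by deleting its $k$-th row and column, and assume that for every $k$ there is $n_0(k)$ such that all entries of $(Q^{(k)})^n$ are positive for all $n>n_0(k)$. Let $\mu_k$ be the Perron–Frobenius eigenvalue of $Q^{(k)}$, $\lambda_k=-\ln\mu_k$ ($\lambda_k=\infty$ if $\mu_k=0$), and for a probability vector $p\in\Delta_N$ let $M^{(k)}_n(p)=\sum_{i\ne k}\bigl(p^{(k)}(Q^{(k)})^n\bigr)_i$ with $p^{(k)}=(p_i)_{i\ne k}$. Then: (1) If $\lambda_i>\lambda_j$, then for any $p,q\in\Delta_N$ with $q_j<1$ there is $n_0=n_0(p,q)\in\mathbb{N}$ such that $M^{(i)}_n(p)<M^{(j)}_n(q)$ for all $n\ge n_0$. (2) If $\sigma$ is a permutation of $\{1,\dots,N\}$ with $\lambda_{\sigma_N}<\dots<\lambda_{\sigma_1}<\infty$, then for any family $p(1),\dots,p(N)\in\Delta_N$ with $p_i(i)<1$ for all $i$ there is $n_0\in\mathbb{N}$ such that for all $n\ge n_0$, \[ M^{(\sigma_1)}_n(p(\sigma_1))<M^{(\sigma_2)}_n(p(\sigma_2))<\dots<M^{(\sigma_N)}_n(p(\sigma_N)). \] (3) If $i$ is a state with $\lambda_i>\lambda_k$ for all $k\ne i$, then for any $p\in\Delta_N$ and any $k\ne i$ with $p_k<1$ there is $n_0=n_0(p)$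 such that $M^{(i)}_n(p)<M^{(k)}_n(p)$ for all $n\ge n_0$.
   Context: $\Delta_N$ is the simplex of probability distributions on $\{1,\dots,N\}$ (row vectors). $M^{(k)}_n(p)$ is the survival probability up to time $n$ of the chain started from $p$ and killed upon entering state $k$. *)

theory Defs
  imports Complex_Main "HOL-Library.Extended_Real"
begin

text \<open>Matrices are functions nat => nat => real, restricted to a finite index set S.
  mpow S A n is the n-th power of the matrix (A i j) with i,j ranging over S.\<close>
fun mpow :: "nat set \<Rightarrow> (nat \<Rightarrow> nat \<Rightarrow> real) \<Rightarrow> nat \<Rightarrow> nat \<Rightarrow> nat \<Rightarrow> real" where
  "mpow S A 0 i j = (if i = j then 1 else 0)"
| "mpow S A (Suc n) i j = (\<Sum>l\<in>S. mpow S A n i l * A l j)"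

definition stochastic :: "nat set \<Rightarrow> (nat \<Rightarrow> nat \<Rightarrow> real) \<Rightarrow> bool" where
  "stochastic S P \<longleftrightarrow> (\<forall>i\<in>S. \<forall>j\<in>S. P i j \<ge> 0) \<and> (\<forall>i\<in>S. (\<Sum>j\<in>S. P i j) = 1)"

definition irreducible_chain :: "nat set \<Rightarrow> (nat \<Rightarrow> nat \<Rightarrow> real) \<Rightarrow> bool" where
  "irreducible_chain S P \<longleftrightarrow> (\<forall>i\<in>S. \<forall>j\<in>S. \<exists>n. mpow S P n i j > 0)"

definition prob_vec :: "nat set \<Rightarrow> (nat \<Rightarrow> real) \<Rightarrow> bool" where
  "prob_vec S p \<longleftrightarrow> (\<forall>i\<in>S. p i \<ge> 0) \<and> (\<Sum>i\<in>S. p i) = 1"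

definition is_eigenvalue :: "nat set \<Rightarrow> (nat \<Rightarrow> nat \<Rightarrow> real) \<Rightarrow> complex \<Rightarrow> bool" where
  "is_eigenvalue T A z \<longleftrightarrow> (\<exists>v :: nat \<Rightarrow> complex. (\<exists>i\<in>T. v i \<noteq> 0) \<and>
      (\<forall>i\<in>T. (\<Sum>j\<in>T. of_real (A i j) * v j) = z * v i))"

text \<open>Perron--Frobenius eigenvalue of a nonnegative matrix: its spectral radius
  (the largest modulus of its eigenvalues, which is itself an eigenvalue).\<close>
definition pf_eigenvalue :: "nat set \<Rightarrow> (nat \<Rightarrow> nat \<Rightarrow> real) \<Rightarrow> real" where
  "pf_eigenvalue T A = Sup {cmod z | z. is_eigenvalue T A z}"

definition decay_rate :: "nat set \<Rightarrow> (nat \<Rightarrow> nat \<Rightarrow> real) \<Rightarrow> nat \<Rightarrow> ereal" where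
  "decay_rate S P k = (let \<mu> = pf_eigenvalue (S - {k}) P in
      if \<mu> = 0 then \<infinity> else ereal (- ln \<mu>))"

definition survival :: "nat set \<Rightarrow> (nat \<Rightarrow> nat \<Rightarrow> real) \<Rightarrow> nat \<Rightarrow> nat \<Rightarrow> (nat \<Rightarrow> real) \<Rightarrow> real" where
  "survival S P k n p = (\<Sum>i\<in>S - {k}. \<Sum>l\<in>S - {k}. p l * mpow (S - {k}) P n l i)"

end

theory Submission
  imports Defs "Jordan_Normal_Form.Spectral_Radius"
begin


lemma mat_pow_transfer:
  fixes B :: "nat \<Rightarrow> nat \<Rightarrow> real"
  assumes g: "bij_betw g {..<n} T"
  shows "a < n \<Longrightarrow> b < n \<Longrightarrow>
    (mat n n (\<lambda>(a,b). complex_of_real (B (g a) (g b))) ^\<^sub>m k) $$ (a,b) = of_real (mpow T B k (g a) (g b))"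
proof (induction k arbitrary: a b)
  case 0
  then show ?case using bij_betw_inv_into_left[OF g] 
    by (auto simp: lessThan_iff) (metis lessThan_iff)
next
  case (Suc k)
  let ?M = "mat n n (\<lambda>(a,b). complex_of_real (B (g a) (g b)))"
  have "(?M ^\<^sub>m Suc k) $$ (a,b) = ((?M ^\<^sub>m k) * ?M) $$ (a,b)" by simp
  also have "\<dots> = (\<Sum>c\<in>{0..<n}. (?M ^\<^sub>m k) $$ (a,c) * ?M $$ (c,b))"
    using Suc.prems by (simp add: scalar_prod_def)
  also have "\<dots> = (\<Sum>c\<in>{..<n}. of_real (mpow T B k (g a) (g c) * B (g c) (g b)))"
    using Suc by (intro sum.cong) auto
  also have "\<dots> = of_real (\<Sum>l\<in>T. mpow T B k (g a) l * B l (g b))"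
    by (subst sum.reindex_bij_betw[OF g, of "\<lambda>l. complex_of_real (mpow T B k (g a) l * B l (g b))"]) simp
  finally show ?case by simp
qed

lemma eig_transfer:
  fixes B :: "nat \<Rightarrow> nat \<Rightarrow> real"
  assumes g: "bij_betw g {..<n} T"
    and ev: "eigenvalue (mat n n (\<lambda>(a,b). complex_of_real (B (g a) (g b)))) z"
  shows "is_eigenvalue T B z"
proof -
  let ?M = "mat n n (\<lambda>(a,b). complex_of_real (B (g a) (g b)))"
  from ev obtain v where v: "v \<in> carrier_vec n" "v \<noteq> 0\<^sub>v n" "?M *\<^sub>v v = z \<cdot>\<^sub>v v"
    unfolding eigenvalue_def eigenvector_def by auto
  define w where "w x = v $ (inv_into {..<n} g x)" for x
  have inj: "inj_on g {..<n}" using g bij_betw_def by blast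
  have wg: "w (g a) = v $ a" if "a < n" for a
    unfolding w_def using inv_into_f_f[OF inj] that by simp
  have "\<exists>a<n. v $ a \<noteq> 0"
  proof (rule ccontr)
    assume "\<not> ?thesis"
    hence "v = 0\<^sub>v n" using v(1) by (intro eq_vecI) auto
    with v(2) show False by simp
  qed
  then obtain a where a: "a < n" "v $ a \<noteq> 0" by auto
  have ex: "\<exists>i\<in>T. w i \<noteq> 0"
    using a wg[OF a(1)] bij_betw_apply[OF g] by (intro bexI[of _ "g a"]) auto
  have eq: "(\<Sum>j\<in>T. of_real (B i j) * w j) = z * w i" if i: "i \<in> T" for i
  proof -
    define a where "a = inv_into {..<n} g i"
    have a: "a < n" "g a = i" unfolding a_def
      using i g by (auto simp: bij_betw_def inv_into_into f_inv_into_f)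
    have "(\<Sum>j\<in>T. of_real (B i j) * w j) = (\<Sum>c\<in>{..<n}. of_real (B i (g c)) * w (g c))"
      by (rule sum.reindex_bij_betw[OF g, symmetric])
    also have "\<dots> = (\<Sum>c\<in>{0..<n}. ?M $$ (a,c) * v $ c)"
      using a wg by (intro sum.cong) auto
    also have "\<dots> = (?M *\<^sub>v v) $ a"
      using a v(1) by (simp add: scalar_prod_def)
    also have "\<dots> = z * v $ a" using v(3) a v(1) by simp
    also have "\<dots> = z * w i" using wg[OF a(1)] a(2) by simp
    finally show ?thesis .
  qed
  show ?thesis unfolding is_eigenvalue_def using ex eq by blast
qed

lemma eig_nonempty:
  fixes B :: "nat \<Rightarrow> nat \<Rightarrow> real"
  assumes "finite T" "T \<noteq> {}"
  shows "\<exists>z. is_eigenvalue T B z"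
proof -
  obtain g where g: "bij_betw g {0..<card T} T" using ex_bij_betw_nat_finite[OF assms(1)] by blast
  hence g': "bij_betw g {..<card T} T" by (simp add: atLeast0LessThan)
  have "card T > 0" using assms by (simp add: card_gt_0_iff)
  from spectrum_non_empty[OF _ this, of "mat (card T) (card T) (\<lambda>(a,b). complex_of_real (B (g a) (g b)))"]
  obtain z where "eigenvalue (mat (card T) (card T) (\<lambda>(a,b). complex_of_real (B (g a) (g b)))) z"
    unfolding spectrum_def by auto
  from eig_transfer[OF g' this] show ?thesis by blast
qed

lemma mpow_scale: "mpow T (\<lambda>i j. c * A i j) k i j = c ^ k * mpow T A k i j"
  by (induction k arbitrary: j) (auto simp: sum_distrib_left mult_ac)

lemma growth_ub:
  fixes A :: "nat \<Rightarrow> nat \<Rightarrow> real"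
  assumes T: "finite T" "T \<noteq> {}" and r: "r > 0"
    and lt: "\<forall>z. is_eigenvalue T A z \<longrightarrow> cmod z < r"
  shows "\<exists>C. \<forall>k. \<forall>i\<in>T. \<forall>j\<in>T. \<bar>mpow T A k i j\<bar> \<le> C * r ^ k"
proof -
  define B where "B = (\<lambda>i j. inverse r * A i j)"
  have ltB: "cmod w < 1" if w: "is_eigenvalue T B w" for w
  proof -
    from w obtain v where v: "\<exists>i\<in>T. v i \<noteq> 0"
      "\<forall>i\<in>T. (\<Sum>j\<in>T. of_real (B i j) * v j) = w * v i" unfolding is_eigenvalue_def by auto
    have "\<forall>i\<in>T. (\<Sum>j\<in>T. of_real (A i j) * v j) = (of_real r * w) * v i"
    proof
      fix i assume i: "i \<in> T"
      have "(\<Sum>j\<in>T. of_real (A i j) * v j) = of_real r * (\<Sum>j\<in>T. of_real (B i j) * v j)"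
        using r by (simp add: B_def sum_distrib_left field_simps)
      also have "\<dots> = (of_real r * w) * v i" using v(2) i by simp
      finally show "(\<Sum>j\<in>T. of_real (A i j) * v j) = (of_real r * w) * v i" .
    qed
    hence "is_eigenvalue T A (of_real r * w)" using v(1) unfolding is_eigenvalue_def by blast
    with lt have "cmod (of_real r * w) < r" by blast
    hence "r * cmod w < r * 1" using r by (simp add: norm_mult)
    thus ?thesis using r by simp
  qed
  obtain g where g: "bij_betw g {0..<card T} T" using ex_bij_betw_nat_finite[OF T(1)] by blast
  hence g': "bij_betw g {..<card T} T" by (simp add: atLeast0LessThan)
  define n where "n = card T"
  have n: "n > 0" using T by (simp add: card_gt_0_iff n_def)
  define M where "M = mat n n (\<lambda>(a,b). complex_of_real (B (g a) (g b)))"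
  have M: "M \<in> carrier_mat n n" unfolding M_def by simp
  from spectral_radius_mem_max(1)[OF M n] obtain w where
    w: "w \<in> spectrum M" "spectral_radius M = cmod w" by auto
  have "is_eigenvalue T B w" using eig_transfer[OF g'] w(1) unfolding spectrum_def M_def n_def by auto
  hence "spectral_radius M < 1" using ltB w(2) by simp
  from spectral_radius_jnf_norm_bound_less_1_upper_triangular[OF M this]
  obtain c where c: "\<forall>k. norm_bound (M ^\<^sub>m k) c" by blast
  have "\<forall>k. \<forall>i\<in>T. \<forall>j\<in>T. \<bar>mpow T A k i j\<bar> \<le> c * r ^ k"
  proof (intro allI ballI)
    fix k i j assume i: "i \<in> T" and j: "j \<in> T"
    obtain a where a: "a < n" "g a = i" using i g' unfolding n_def bij_betw_def by (metis imageE lessThan_iff)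
    obtain b where b: "b < n" "g b = j" using j g' unfolding n_def bij_betw_def by (metis imageE lessThan_iff)
    have "M ^\<^sub>m k \<in> carrier_mat n n" using M by simp
    hence "norm ((M ^\<^sub>m k) $$ (a,b)) \<le> c" using c a b M unfolding norm_bound_def by auto
    also have "(M ^\<^sub>m k) $$ (a,b) = of_real (mpow T B k i j)"
      unfolding M_def using mat_pow_transfer[OF g'[folded n_def] a(1) b(1)] a b by simp
    finally have "\<bar>mpow T B k i j\<bar> \<le> c" by simp
    also have "mpow T B k i j = inverse r ^ k * mpow T A k i j"
      unfolding B_def by (rule mpow_scale)
    finally have "inverse r ^ k * \<bar>mpow T A k i j\<bar> \<le> c" using r by (simp add: abs_mult)
    thus "\<bar>mpow T A k i j\<bar> \<le> c * r ^ k" using r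
      by (simp add: field_simps power_inverse)
  qed
  thus ?thesis by blast
qed



lemma mpow_nonneg:
  assumes "\<forall>i\<in>T. \<forall>j\<in>T. A i j \<ge> 0" "i \<in> T" "j \<in> T"
  shows "mpow T A n i j \<ge> 0"
  using assms(3)
proof (induction n arbitrary: j)
  case 0 then show ?case by simp
next
  case (Suc n) then show ?case using assms(1,2) by (auto intro!: sum_nonneg)
qed

lemma mpow_add:
  assumes "finite T" "j \<in> T"
  shows "mpow T A (m + n) i j = (\<Sum>l\<in>T. mpow T A m i l * mpow T A n l j)"
  using assms(2)
proof (induction n arbitrary: j)
  case 0 then show ?case using assms(1) by (simp add: if_distrib cong: if_cong)
next
  case (Suc n)
  have "mpow T A (m + Suc n) i j = (\<Sum>l'\<in>T. mpow T A (m+n) i l' * A l' j)" by simp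
  also have "\<dots> = (\<Sum>l'\<in>T. (\<Sum>l\<in>T. mpow T A m i l * mpow T A n l l') * A l' j)"
    using Suc.IH by (intro sum.cong) auto
  also have "\<dots> = (\<Sum>l\<in>T. mpow T A m i l * (\<Sum>l'\<in>T. mpow T A n l l' * A l' j))"
    by (simp only: sum_distrib_right sum_distrib_left mult.assoc) (rule sum.swap)
  finally show ?case by simp
qed

lemma eig_pow:
  fixes v :: "nat \<Rightarrow> complex"
  assumes "finite T" "\<forall>i\<in>T. (\<Sum>j\<in>T. of_real (A i j) * v j) = z * v i" "l \<in> T"
  shows "(\<Sum>k\<in>T. of_real (mpow T A n l k) * v k) = z ^ n * v l"
proof (induction n)
  case 0
  have "(\<Sum>k\<in>T. of_real (mpow T A 0 l k) * v k) = (\<Sum>k\<in>T. if k = l then v l else 0)"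
    by (rule sum.cong) auto
  then show ?case using assms(1,3) by simp
next
  case (Suc n)
  have "(\<Sum>k\<in>T. of_real (mpow T A (Suc n) l k) * v k)
      = (\<Sum>k\<in>T. \<Sum>l'\<in>T. of_real (mpow T A n l l') * (of_real (A l' k) * v k))"
    by (intro sum.cong refl) (simp add: sum_distrib_right mult.assoc)
  also have "\<dots> = (\<Sum>l'\<in>T. of_real (mpow T A n l l') * (\<Sum>k\<in>T. of_real (A l' k) * v k))"
    by (simp only: sum_distrib_left) (rule sum.swap)
  also have "\<dots> = (\<Sum>l'\<in>T. of_real (mpow T A n l l') * (z * v l'))"
    using assms(2) by (intro sum.cong) auto
  also have "\<dots> = z * (\<Sum>l'\<in>T. of_real (mpow T A n l l') * v l')"
    by (simp add: sum_distrib_left mult_ac)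
  finally show ?case using Suc by simp
qed

lemma max_entry:
  fixes v :: "nat \<Rightarrow> complex"
  assumes "finite T" "\<exists>i\<in>T. v i \<noteq> 0"
  obtains l where "l \<in> T" "\<forall>k\<in>T. cmod (v k) \<le> cmod (v l)" "cmod (v l) > 0"
proof -
  have ne: "T \<noteq> {}" using assms by auto
  have "Max ((\<lambda>k. cmod (v k)) ` T) \<in> (\<lambda>k. cmod (v k)) ` T"
    by (rule Max_in) (use assms ne in auto)
  then obtain l where l: "l \<in> T" "cmod (v l) = Max ((\<lambda>k. cmod (v k)) ` T)" by auto
  have le: "\<forall>k\<in>T. cmod (v k) \<le> cmod (v l)" using l(2) assms(1) by auto
  from assms(2) obtain i where "i \<in> T" "v i \<noteq> 0" by auto
  hence "cmod (v l) > 0" using le by (meson zero_less_norm_iff order_less_le_trans)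
  with l le that show ?thesis by blast
qed

lemma row_lb:
  assumes T: "finite T" and nn: "\<forall>i\<in>T. \<forall>j\<in>T. A i j \<ge> 0" and ev: "is_eigenvalue T A z"
  shows "\<exists>l\<in>T. \<forall>n. cmod z ^ n \<le> (\<Sum>k\<in>T. mpow T A n l k)"
proof -
  from ev obtain v where v: "\<exists>i\<in>T. v i \<noteq> 0"
      "\<forall>i\<in>T. (\<Sum>j\<in>T. of_real (A i j) * v j) = z * v i" unfolding is_eigenvalue_def by auto
  obtain l where l: "l \<in> T" "\<forall>k\<in>T. cmod (v k) \<le> cmod (v l)" "cmod (v l) > 0"
    using max_entry[OF T v(1)] by blast
  have "cmod z ^ n \<le> (\<Sum>k\<in>T. mpow T A n l k)" for n
  proof -
    have "cmod z ^ n * cmod (v l) = cmod (\<Sum>k\<in>T. of_real (mpow T A n l k) * v k)"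
      using eig_pow[OF T v(2) l(1)] by (simp add: norm_mult norm_power)
    also have "\<dots> \<le> (\<Sum>k\<in>T. cmod (of_real (mpow T A n l k) * v k))" by (rule norm_sum)
    also have "\<dots> = (\<Sum>k\<in>T. mpow T A n l k * cmod (v k))"
      using mpow_nonneg[OF nn l(1)] by (intro sum.cong) (auto simp: norm_mult)
    also have "\<dots> \<le> (\<Sum>k\<in>T. mpow T A n l k * cmod (v l))"
      using mpow_nonneg[OF nn l(1)] l(2) by (intro sum_mono mult_left_mono) auto
    also have "\<dots> = (\<Sum>k\<in>T. mpow T A n l k) * cmod (v l)" by (simp add: sum_distrib_right)
    finally show ?thesis using l(3) by simp
  qed
  with l show ?thesis by blast
qed

lemma eig_bdd:
  assumes T: "finite T" and ev: "is_eigenvalue T A z"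
  shows "cmod z \<le> (\<Sum>i\<in>T. \<Sum>j\<in>T. \<bar>A i j\<bar>)"
proof -
  from ev obtain v where v: "\<exists>i\<in>T. v i \<noteq> 0"
      "\<forall>i\<in>T. (\<Sum>j\<in>T. of_real (A i j) * v j) = z * v i" unfolding is_eigenvalue_def by auto
  obtain l where l: "l \<in> T" "\<forall>k\<in>T. cmod (v k) \<le> cmod (v l)" "cmod (v l) > 0"
    using max_entry[OF T v(1)] by blast
  have "cmod z * cmod (v l) = cmod (\<Sum>j\<in>T. of_real (A l j) * v j)"
    using v(2) l(1) by (simp add: norm_mult)
  also have "\<dots> \<le> (\<Sum>j\<in>T. cmod (of_real (A l j) * v j))" by (rule norm_sum)
  also have "\<dots> \<le> (\<Sum>j\<in>T. \<bar>A l j\<bar> * cmod (v l))"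
    using l(2) by (intro sum_mono) (auto simp: norm_mult intro: mult_left_mono)
  also have "\<dots> = (\<Sum>j\<in>T. \<bar>A l j\<bar>) * cmod (v l)" by (simp add: sum_distrib_right)
  also have "\<dots> \<le> (\<Sum>i\<in>T. \<Sum>j\<in>T. \<bar>A i j\<bar>) * cmod (v l)"
    using l T by (intro mult_right_mono member_le_sum[where f = "\<lambda>i. \<Sum>j\<in>T. \<bar>A i j\<bar>"]) (auto intro: sum_nonneg)
  finally show ?thesis using l(3) by simp
qed

lemma pf_facts:
  assumes T: "finite T" "T \<noteq> {}"
  shows "\<And>z. is_eigenvalue T A z \<Longrightarrow> cmod z \<le> pf_eigenvalue T A"
    and "pf_eigenvalue T A \<ge> 0"
    and "\<And>r. r < pf_eigenvalue T A \<Longrightarrow> \<exists>z. is_eigenvalue T A z \<and> r < cmod z"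
proof -
  let ?E = "{cmod z | z. is_eigenvalue T A z}"
  have ne: "?E \<noteq> {}" using eig_nonempty[OF T] by auto
  have bdd: "bdd_above ?E" using eig_bdd[OF T(1)] unfolding bdd_above_def by blast
  show up: "cmod z \<le> pf_eigenvalue T A" if "is_eigenvalue T A z" for z
    unfolding pf_eigenvalue_def using that by (intro cSup_upper bdd) auto
  obtain z where "is_eigenvalue T A z" using eig_nonempty[OF T] by blast
  from up[OF this] show "pf_eigenvalue T A \<ge> 0" by (meson norm_ge_zero order_trans)
  show "\<exists>z. is_eigenvalue T A z \<and> r < cmod z" if "r < pf_eigenvalue T A" for r
    using less_cSupD[OF ne, of r] that unfolding pf_eigenvalue_def by auto
qed



lemma core:
  assumes S: "finite S" and nn: "\<forall>a\<in>S. \<forall>b\<in>S. A a b \<ge> 0"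
    and i: "i \<in> S" and j: "j \<in> S"
    and Ti: "S - {i} \<noteq> {}" and Tj: "S - {j} \<noteq> {}"
    and prim: "\<exists>n0. \<forall>n>n0. \<forall>a\<in>S-{j}. \<forall>b\<in>S-{j}. mpow (S-{j}) A n a b > 0"
    and lt: "pf_eigenvalue (S-{i}) A < pf_eigenvalue (S-{j}) A"
    and p: "prob_vec S p" and q: "prob_vec S q" and qj: "q j < 1"
  shows "eventually (\<lambda>n. survival S A i n p < survival S A j n q) sequentially"
proof -
  define T where "T = S - {i}"
  define U where "U = S - {j}"
  have fT: "finite T" "finite U" using S unfolding T_def U_def by auto
  have TU: "T \<noteq> {}" "U \<noteq> {}" using Ti Tj unfolding T_def U_def by auto
  define mi where "mi = pf_eigenvalue T A"
  define mj where "mj = pf_eigenvalue U A"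
  have mi0: "mi \<ge> 0" unfolding mi_def using pf_facts(2)[OF fT(1) TU(1)] .
  have mij: "mi < mj" using lt unfolding mi_def mj_def T_def U_def .
  define r1 where "r1 = (2*mi + mj)/3"
  define r where "r = (mi + 2*mj)/3"
  have r1: "0 < r1" "mi < r1" "r1 < r" "r < mj" "0 < r"
    using mi0 mij unfolding r1_def r_def by auto
  have "\<forall>z. is_eigenvalue T A z \<longrightarrow> cmod z < r1"
    using pf_facts(1)[OF fT(1) TU(1)] r1(2) unfolding mi_def by force
  from growth_ub[OF fT(1) TU(1) r1(1) this]
  obtain C where C: "\<forall>k. \<forall>a\<in>T. \<forall>b\<in>T. \<bar>mpow T A k a b\<bar> \<le> C * r1 ^ k" by blast
  have p1: "\<bar>p a\<bar> \<le> 1" if "a \<in> S" for a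
  proof -
    have "p a \<le> (\<Sum>a\<in>S. p a)" using p that S unfolding prob_vec_def
      by (intro member_le_sum) auto
    thus ?thesis using p that unfolding prob_vec_def by auto
  qed
  define K where "K = real (card T) * (real (card T) * \<bar>C\<bar>)"
  have K0: "K \<ge> 0" unfolding K_def by simp
  have ub: "survival S A i n p \<le> K * r1 ^ n" for n
  proof -
    have t: "p a * mpow T A n a b \<le> \<bar>C\<bar> * r1 ^ n" if "a \<in> T" "b \<in> T" for a b
    proof -
      have "p a * mpow T A n a b \<le> \<bar>p a\<bar> * \<bar>mpow T A n a b\<bar>"
        by (metis abs_ge_self abs_mult)
      also have "\<dots> \<le> 1 * (C * r1 ^ n)"
        using p1[of a] C that unfolding T_def by (intro mult_mono) auto
      also have "\<dots> \<le> \<bar>C\<bar> * r1 ^ n"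
        using mult_right_mono[OF abs_ge_self[of C], of "r1^n"] r1(1) by simp
      finally show ?thesis .
    qed
    have "survival S A i n p = (\<Sum>b\<in>T. \<Sum>a\<in>T. p a * mpow T A n a b)"
      unfolding survival_def T_def ..
    also have "\<dots> \<le> (\<Sum>b\<in>T. real (card T) * (\<bar>C\<bar> * r1 ^ n))"
      using t by (intro sum_mono sum_bounded_above) auto
    also have "\<dots> = K * r1 ^ n" unfolding K_def by simp
    finally show ?thesis .
  qed
  have "r < pf_eigenvalue U A" using r1(4) unfolding mj_def .
  from pf_facts(3)[OF fT(2) TU(2) this]
  obtain z where z: "is_eigenvalue U A z" "r < cmod z" by blast
  have nnU: "\<forall>a\<in>U. \<forall>b\<in>U. A a b \<ge> 0" using nn unfolding U_def by auto
  from row_lb[OF fT(2) nnU z(1)]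
  obtain l where l: "l \<in> U" "\<forall>n. cmod z ^ n \<le> (\<Sum>k\<in>U. mpow U A n l k)" by blast
  have rl: "r ^ n \<le> (\<Sum>k\<in>U. mpow U A n l k)" for n
  proof -
    have "r ^ n \<le> cmod z ^ n" by (rule power_mono) (use z(2) r1(5) in auto)
    from this l(2)[rule_format, of n] show ?thesis by (rule order_trans)
  qed
  from prim obtain n0 where n0: "\<forall>n>n0. \<forall>a\<in>U. \<forall>b\<in>U. mpow U A n a b > 0"
    unfolding U_def by blast
  define m where "m = Suc n0"
  define \<delta> where "\<delta> = Min ((\<lambda>a. mpow U A m a l) ` U)"
  have \<delta>0: "\<delta> > 0" unfolding \<delta>_def
  proof (subst Min_gr_iff)
    show "finite ((\<lambda>a. mpow U A m a l) ` U)" using fT(2) by simp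
    show "(\<lambda>a. mpow U A m a l) ` U \<noteq> {}" using TU(2) by simp
    show "\<forall>x\<in>(\<lambda>a. mpow U A m a l) ` U. 0 < x" using n0 l(1) unfolding m_def by auto
  qed
  have \<delta>le: "\<delta> \<le> mpow U A m a l" if "a \<in> U" for a
    unfolding \<delta>_def using fT(2) that by (intro Min_le) auto
  have rowlb: "\<delta> * r ^ n \<le> (\<Sum>b\<in>U. mpow U A (m+n) a b)" if a: "a \<in> U" for a n
  proof -
    have "(\<Sum>b\<in>U. mpow U A (m+n) a b) = (\<Sum>b\<in>U. \<Sum>c\<in>U. mpow U A m a c * mpow U A n c b)"
      using mpow_add[OF fT(2)] by (intro sum.cong) auto
    also have "\<dots> = (\<Sum>c\<in>U. mpow U A m a c * (\<Sum>b\<in>U. mpow U A n c b))"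
      by (simp only: sum_distrib_left) (rule sum.swap)
    also have "\<dots> \<ge> mpow U A m a l * (\<Sum>b\<in>U. mpow U A n l b)"
      using fT(2) l(1) mpow_nonneg[OF nnU a] mpow_nonneg[OF nnU]
      by (intro member_le_sum[where f = "\<lambda>c. mpow U A m a c * (\<Sum>b\<in>U. mpow U A n c b)"] mult_nonneg_nonneg sum_nonneg) auto
    moreover have "\<delta> * r ^ n \<le> mpow U A m a l * (\<Sum>b\<in>U. mpow U A n l b)"
      using \<delta>le[OF a] rl[of n] \<delta>0 r1(5) by (intro mult_mono) auto
    ultimately show ?thesis by linarith
  qed
  have sq: "(\<Sum>a\<in>U. q a) = 1 - q j"
    using q S j sum.remove[OF S j, of q] unfolding prob_vec_def U_def by auto
  have lb: "(1 - q j) * \<delta> * r ^ n \<le> survival S A j (m+n) q" for n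
  proof -
    have "survival S A j (m+n) q = (\<Sum>b\<in>U. \<Sum>a\<in>U. q a * mpow U A (m+n) a b)"
      unfolding survival_def U_def ..
    also have "\<dots> = (\<Sum>a\<in>U. q a * (\<Sum>b\<in>U. mpow U A (m+n) a b))"
      by (simp only: sum_distrib_left) (rule sum.swap)
    also have "\<dots> \<ge> (\<Sum>a\<in>U. q a * (\<delta> * r ^ n))"
      using rowlb q unfolding prob_vec_def U_def by (intro sum_mono mult_left_mono) auto
    moreover have "(\<Sum>a\<in>U. q a * (\<delta> * r ^ n)) = (1 - q j) * \<delta> * r ^ n"
      using sq by (simp add: sum_distrib_right[symmetric])
    ultimately show ?thesis by linarith
  qed
  define c where "c = (1 - q j) * \<delta> / r ^ m"
  have c0: "c > 0" unfolding c_def using qj \<delta>0 r1(5) by auto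
  have lb': "c * r ^ n \<le> survival S A j n q" if nm: "n \<ge> m" for n
  proof -
    obtain k where k: "n = m + k" using le_Suc_ex[OF nm] by blast
    have "c * r ^ n = (1 - q j) * \<delta> * r ^ k"
      unfolding c_def k using r1(5) by (simp add: power_add)
    thus ?thesis using lb[of k] k by simp
  qed
  have "(\<lambda>n. (r1/r) ^ n) \<longlonglongrightarrow> 0"
    by (rule LIMSEQ_power_zero) (use r1 in auto)
  hence ev1: "eventually (\<lambda>n. (r1/r) ^ n < c / (K+1)) sequentially"
    using c0 K0 by (intro order_tendstoD(2)) auto
  have ev2: "eventually (\<lambda>n. n \<ge> m) sequentially" by (rule eventually_ge_at_top)
  show ?thesis
    unfolding T_def[symmetric] U_def[symmetric]
  proof (rule eventually_mono[OF eventually_conj[OF ev1 ev2]])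
    fix n assume n: "(r1/r) ^ n < c / (K+1) \<and> m \<le> n"
    have "(K+1) * (r1/r) ^ n < c" using n K0 by (simp add: field_simps)
    hence "(K+1) * (r1/r) ^ n * r ^ n < c * r ^ n" using r1(5) by simp
    moreover have "(r1/r) ^ n * r ^ n = r1 ^ n" using r1(5) by (simp add: power_divide)
    ultimately have "(K+1) * r1 ^ n < c * r ^ n" by (simp add: mult.assoc)
    moreover have "K * r1 ^ n \<le> (K+1) * r1 ^ n" using r1(1) by (intro mult_right_mono) auto
    ultimately show "survival S A i n p < survival S A j n q"
      using ub[of n] lb'[of n] n by linarith
  qed
qed

lemma decay_lt:
  assumes "decay_rate S P i > decay_rate S P j"
    and "pf_eigenvalue (S-{i}) P \<ge> 0" "pf_eigenvalue (S-{j}) P \<ge> 0"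
  shows "pf_eigenvalue (S-{i}) P < pf_eigenvalue (S-{j}) P"
proof -
  define a where "a = pf_eigenvalue (S-{i}) P"
  define b where "b = pf_eigenvalue (S-{j}) P"
  have a: "a \<ge> 0" and b: "b \<ge> 0" using assms unfolding a_def b_def by auto
  have d: "(if a = 0 then \<infinity> else ereal (- ln a)) > (if b = 0 then \<infinity> else ereal (- ln b))"
    using assms(1) unfolding decay_rate_def Let_def a_def b_def .
  have "a < b"
  proof (cases "b = 0")
    case True then show ?thesis using d by auto
  next
    case False
    show ?thesis
    proof (cases "a = 0")
      case True then show ?thesis using False b by auto
    next
      case aF: False
      with False d have "- ln a > - ln b" by auto
      hence "ln a < ln b" by simp
      thus ?thesis using a b aF False by simp
    qed
  qed
  thus ?thesis unfolding a_def b_def .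
qed

theorem corollary1:
  fixes N :: nat and P :: "nat \<Rightarrow> nat \<Rightarrow> real"
  assumes N: "N \<ge> 2"
    and stoch: "stochastic {1..N} P"
    and irred: "irreducible_chain {1..N} P"
    and prim: "\<forall>k\<in>{1..N}. \<exists>n0. \<forall>n>n0. \<forall>i\<in>{1..N} - {k}. \<forall>j\<in>{1..N} - {k}.
                  mpow ({1..N} - {k}) P n i j > 0"
  shows
   "(\<forall>i\<in>{1..N}. \<forall>j\<in>{1..N}. \<forall>p q.
       decay_rate {1..N} P i > decay_rate {1..N} P j \<longrightarrow>
       prob_vec {1..N} p \<longrightarrow> prob_vec {1..N} q \<longrightarrow> q j < 1 \<longrightarrow>
       (\<exists>n0. \<forall>n\<ge>n0. survival {1..N} P i n p < survival {1..N} P j n q))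
  \<and> (\<forall>\<sigma> p. bij_betw \<sigma> {1..N} {1..N} \<longrightarrow>
       (\<forall>a\<in>{1..<N}. decay_rate {1..N} P (\<sigma> (a + 1)) < decay_rate {1..N} P (\<sigma> a)) \<longrightarrow>
       decay_rate {1..N} P (\<sigma> 1) < \<infinity> \<longrightarrow>
       (\<forall>i\<in>{1..N}. prob_vec {1..N} (p i) \<and> p i i < 1) \<longrightarrow>
       (\<exists>n0. \<forall>n\<ge>n0. \<forall>a\<in>{1..<N}.
          survival {1..N} P (\<sigma> a) n (p (\<sigma> a)) < survival {1..N} P (\<sigma> (a + 1)) n (p (\<sigma> (a + 1)))))
  \<and> (\<forall>i\<in>{1..N}. (\<forall>k\<in>{1..N} - {i}. decay_rate {1..N} P i > decay_rate {1..N} P k) \<longrightarrow>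
       (\<forall>p. \<forall>k\<in>{1..N} - {i}. prob_vec {1..N} p \<longrightarrow> p k < 1 \<longrightarrow>
          (\<exists>n0. \<forall>n\<ge>n0. survival {1..N} P i n p < survival {1..N} P k n p)))"
  proof -
  let ?S = "{1..N::nat}"
  have fS: "finite ?S" by simp
  have nn: "\<forall>a\<in>?S. \<forall>b\<in>?S. P a b \<ge> 0" using stoch unfolding stochastic_def by auto
  have ne: "?S - {k} \<noteq> {}" if "k \<in> ?S" for k
  proof -
    have "(if k = 1 then 2 else 1) \<in> ?S - {k}" using N that by auto
    thus ?thesis by blast
  qed
  have c1: "eventually (\<lambda>n. survival ?S P i n p < survival ?S P j n q) sequentially"
    if h: "i \<in> ?S" "j \<in> ?S" "decay_rate ?S P i > decay_rate ?S P j"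
      "prob_vec ?S p" "prob_vec ?S q" "q j < 1" for i j p q
  proof -
    have fi: "finite (?S - {i})" and fj: "finite (?S - {j})" by simp_all
    have lt: "pf_eigenvalue (?S-{i}) P < pf_eigenvalue (?S-{j}) P"
      by (rule decay_lt[OF h(3) pf_facts(2)[OF fi ne[OF h(1)]] pf_facts(2)[OF fj ne[OF h(2)]]])
    have pr: "\<exists>n0. \<forall>n>n0. \<forall>a\<in>?S-{j}. \<forall>b\<in>?S-{j}. mpow (?S-{j}) P n a b > 0"
      using bspec[OF prim h(2)] .
    show ?thesis
      by (rule core[OF fS nn h(1,2) ne[OF h(1)] ne[OF h(2)] pr lt h(4,5,6)])
  qed
  show ?thesis
  proof (intro conjI)
    show "\<forall>i\<in>?S. \<forall>j\<in>?S. \<forall>p q.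
       decay_rate ?S P i > decay_rate ?S P j \<longrightarrow>
       prob_vec ?S p \<longrightarrow> prob_vec ?S q \<longrightarrow> q j < 1 \<longrightarrow>
       (\<exists>n0. \<forall>n\<ge>n0. survival ?S P i n p < survival ?S P j n q)"
      using c1 unfolding eventually_sequentially by blast
  next
    show "\<forall>\<sigma> p. bij_betw \<sigma> ?S ?S \<longrightarrow>
       (\<forall>a\<in>{1..<N}. decay_rate ?S P (\<sigma> (a + 1)) < decay_rate ?S P (\<sigma> a)) \<longrightarrow>
       decay_rate ?S P (\<sigma> 1) < \<infinity> \<longrightarrow>
       (\<forall>i\<in>?S. prob_vec ?S (p i) \<and> p i i < 1) \<longrightarrow>
       (\<exists>n0. \<forall>n\<ge>n0. \<forall>a\<in>{1..<N}.
          survival ?S P (\<sigma> a) n (p (\<sigma> a)) < survival ?S P (\<sigma> (a + 1)) n (p (\<sigma> (a + 1))))"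
    proof (intro allI impI)
      fix \<sigma> p
      assume bij: "bij_betw \<sigma> ?S ?S"
        and dec: "\<forall>a\<in>{1..<N}. decay_rate ?S P (\<sigma> (a + 1)) < decay_rate ?S P (\<sigma> a)"
        and pp: "\<forall>i\<in>?S. prob_vec ?S (p i) \<and> p i i < 1"
      have "\<forall>a\<in>{1..<N}. eventually (\<lambda>n. survival ?S P (\<sigma> a) n (p (\<sigma> a))
              < survival ?S P (\<sigma> (a + 1)) n (p (\<sigma> (a + 1)))) sequentially"
      proof
        fix a assume a: "a \<in> {1..<N}"
        have sa: "\<sigma> a \<in> ?S" "\<sigma> (a+1) \<in> ?S" using bij_betw_apply[OF bij] a by auto
        show "eventually (\<lambda>n. survival ?S P (\<sigma> a) n (p (\<sigma> a))
              < survival ?S P (\<sigma> (a + 1)) n (p (\<sigma> (a + 1)))) sequentially"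
          by (rule c1[OF sa(1) sa(2)]) (use dec a pp sa in auto)
      qed
      from eventually_ball_finite[OF _ this]
      show "\<exists>n0. \<forall>n\<ge>n0. \<forall>a\<in>{1..<N}.
          survival ?S P (\<sigma> a) n (p (\<sigma> a)) < survival ?S P (\<sigma> (a + 1)) n (p (\<sigma> (a + 1)))"
        unfolding eventually_sequentially by simp
    qed
  next
    show "\<forall>i\<in>?S. (\<forall>k\<in>?S - {i}. decay_rate ?S P i > decay_rate ?S P k) \<longrightarrow>
       (\<forall>p. \<forall>k\<in>?S - {i}. prob_vec ?S p \<longrightarrow> p k < 1 \<longrightarrow>
          (\<exists>n0. \<forall>n\<ge>n0. survival ?S P i n p < survival ?S P k n p))"
    proof (intro ballI impI allI)
      fix i p k assume i: "i \<in> ?S" and d: "\<forall>k\<in>?S - {i}. decay_rate ?S P i > decay_rate ?S P k"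
        and k: "k \<in> ?S - {i}" and pv: "prob_vec ?S p" and pk: "p k < 1"
      have "eventually (\<lambda>n. survival ?S P i n p < survival ?S P k n p) sequentially"
        by (rule c1) (use i d k pv pk in auto)
      thus "\<exists>n0. \<forall>n\<ge>n0. survival ?S P i n p < survival ?S P k n p"
        unfolding eventually_sequentially .
    qed
  qed
qed

end
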